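(* Let $0<q<1$ and let $l$ be a non-negative integer. Then \[ q^{2}(1+q)^{2}[l+1]_{q^{2}}+q^{2l+4}+[l+1]_{q^{2}}!\sum_{n=1}^{\infty}\frac{(1/2|q^{2})_{n}^{2}}{[n+1]_{q^{2}}!\,[l+n+1]_{q^{2}}!}\,q^{2(l+2)(n+1)} =\frac{(1+q)^{2}\,([l+1]_{q^{2}}!)^{2}}{\pi_{q}\,(1/2|q^{2})_{l+1}^{2}}\,q^{9/4}. \]
   Context: Let $0<q<1$ and write $q^{x}=e^{x\log q}$. $[z]_{q^2}=\frac{1-q^{2z}}{1-q^2}$; $[0]_{q^2}!=1$, $[n]_{q^2}!=\prod_{k=1}^n[k]_{q^2}$; $(1/2|q^2)_n=\prod_{k=0}^{n-1}[1/2+k]_{q^2}$ (empty product $=1$). With $(z;q)_\infty=\prod_{k\ge0}(1-zq^k)$, $\pi_q=(1-q^2)q^{1/4}\frac{(q^2;q^2)_\infty^2}{(q;q^2)_\infty^2}$. *)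

theory Defs
  imports "HOL-Analysis.Analysis"
begin

text \<open>q-number [z]_{q^2} = (1 - q^{2z})/(1 - q^2), with q^x = exp(x log q) = q powr x.\<close>
definition qnum :: "real \<Rightarrow> real \<Rightarrow> real" where
  "qnum q z = (1 - q powr (2 * z)) / (1 - q\<^sup>2)"

definition qfact :: "real \<Rightarrow> nat \<Rightarrow> real" where
  "qfact q n = (\<Prod>k\<in>{1..n}. qnum q (real k))"

definition qhalf_poch :: "real \<Rightarrow> nat \<Rightarrow> real" where
  "qhalf_poch q n = (\<Prod>k\<in>{0..<n}. qnum q (1/2 + real k))"

definition qpoch_inf :: "real \<Rightarrow> real \<Rightarrow> real" where
  "qpoch_inf z p = (\<Prod>k. 1 - z * p ^ k)"

definition qpi :: "real \<Rightarrow> real" where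
  "qpi q = (1 - q\<^sup>2) * q powr (1/4) * (qpoch_inf (q\<^sup>2) (q\<^sup>2))\<^sup>2 / (qpoch_inf q (q\<^sup>2))\<^sup>2"

end

theory Submission
  imports Defs
begin


definition pc :: "real \<Rightarrow> real \<Rightarrow> nat \<Rightarrow> real" where
  "pc z p n = (\<Prod>k<n. 1 - z * p ^ k)"

lemma pc_0[simp]: "pc z p 0 = 1" by (simp add: pc_def)

lemma pc_Suc: "pc z p (Suc n) = pc z p n * (1 - z * p ^ n)"
  by (simp add: pc_def)

lemma pc_Suc_shift: "pc z p (Suc n) = (1 - z) * pc (z * p) p n"
  unfolding pc_def prod.lessThan_Suc_shift by (simp add: mult.assoc)

lemma pc_add: "pc z p (a + b) = pc z p a * pc (z * p ^ a) p b"
  by (induction b) (simp_all add: pc_Suc power_add mult.assoc)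

lemma pc_pos:
  assumes "0 \<le> z" "z < 1" "0 \<le> p" "p \<le> 1"
  shows "0 < pc z p n"
  unfolding pc_def
proof (rule prod_pos)
  fix k assume "k \<in> {..<n}"
  have "p ^ k \<le> 1" using assms by (simp add: power_le_one)
  hence "z * p ^ k \<le> z" using assms by (simp add: mult_left_le)
  thus "0 < 1 - z * p ^ k" using assms by simp
qed

lemma pc_mono:
  assumes "0 \<le> c" "c \<le> z" "z < 1" "0 \<le> p" "p \<le> 1"
  shows "pc z p n \<le> pc c p n"
  unfolding pc_def
proof (rule prod_mono)
  fix k assume "k \<in> {..<n}"
  have "p ^ k \<le> 1" using assms by (simp add: power_le_one)
  hence "z * p ^ k \<le> z" using assms by (simp add: mult_left_le)
  moreover have "c * p ^ k \<le> z * p ^ k" using assms by (simp add: mult_right_mono)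
  ultimately show "0 \<le> 1 - z * p ^ k \<and> 1 - z * p ^ k \<le> 1 - c * p ^ k" using assms by simp
qed

lemma pc_conv:
  fixes z p :: real
  assumes "0 \<le> z" "z < 1" "0 \<le> p" "p < 1"
  shows "convergent_prod (\<lambda>k. 1 - z * p ^ k)"
proof -
  have "summable (\<lambda>k. \<bar>- (z * p ^ k)\<bar>)"
    using assms by (simp add: abs_mult summable_geometric)
  moreover have "- (z * p ^ k) \<noteq> -1" for k
  proof -
    have "p ^ k \<le> 1" using assms by (simp add: power_le_one)
    hence "z * p ^ k \<le> z" using assms by (simp add: mult_left_le)
    thus ?thesis using assms by auto
  qed
  ultimately have "convergent_prod (\<lambda>k. 1 + - (z * p ^ k))"
    by (rule summable_imp_convergent_prod_real)
  thus ?thesis by simp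
qed

lemma pc_inf_pos:
  fixes z p :: real
  assumes "0 \<le> z" "z < 1" "0 \<le> p" "p < 1"
  shows "0 < (\<Prod>k. 1 - z * p ^ k)"
proof (rule less_0_prodinf[OF pc_conv[OF assms]])
  fix k
  have "p ^ k \<le> 1" using assms by (simp add: power_le_one)
  hence "z * p ^ k \<le> z" using assms by (simp add: mult_left_le)
  thus "0 < 1 - z * p ^ k" using assms by simp
qed

lemma pc_lim:
  fixes z p :: real
  assumes "0 \<le> z" "z < 1" "0 \<le> p" "p < 1"
  shows "(\<lambda>n. pc z p n) \<longlonglongrightarrow> (\<Prod>k. 1 - z * p ^ k)"
proof -
  have "(\<lambda>n. \<Prod>i\<le>n. 1 - z * p ^ i) \<longlonglongrightarrow> (\<Prod>k. 1 - z * p ^ k)"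
    by (rule convergent_prod_LIMSEQ[OF pc_conv[OF assms]])
  hence "(\<lambda>n. pc z p (Suc n)) \<longlonglongrightarrow> (\<Prod>k. 1 - z * p ^ k)"
    by (simp add: pc_def lessThan_Suc_atMost)
  thus ?thesis by (rule LIMSEQ_imp_Suc)
qed

lemma pc_ge_inf:
  fixes z p :: real
  assumes "0 \<le> z" "z < 1" "0 \<le> p" "p < 1"
  shows "(\<Prod>k. 1 - z * p ^ k) \<le> pc z p n"
  unfolding pc_def
proof (rule prod_ge_prodinf)
  show "(\<lambda>k. 1 - z * p ^ k) has_prod (\<Prod>k. 1 - z * p ^ k)"
    using pc_conv[OF assms] convergent_prod_has_prod by blast
  fix i
  have "p ^ i \<le> 1" using assms by (simp add: power_le_one)
  hence "z * p ^ i \<le> z" using assms by (simp add: mult_left_le)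
  thus "0 \<le> 1 - z * p ^ i" using assms by simp
  show "1 - z * p ^ i \<le> 1" using assms by simp
qed

lemma pc_inv_bound:
  assumes "0 < q" "q < 1"
  shows "\<bar>pc (1/q) (q^2) m\<bar> \<le> 1 + \<bar>1 - 1/q\<bar>"
proof -
  have "\<bar>pc (1/q) (q^2) (Suc m)\<bar> \<le> \<bar>1 - 1/q\<bar>" for m
  proof (induction m)
    case 0 then show ?case by (simp add: pc_Suc)
  next
    case (Suc m)
    have e0: "(q^2)^Suc m = q^(2*Suc m)" by (simp only: power_mult)
    have e: "1/q * (q^2)^Suc m = q ^ (2*m+1)" unfolding e0 using assms by simp
    have "q ^ (2*m+1) \<le> 1" using assms by (intro power_le_one) auto
    moreover have "0 \<le> q ^ (2*m+1)" using assms by simp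
    ultimately have "\<bar>1 - 1/q * (q^2)^Suc m\<bar> \<le> 1" unfolding e by simp
    hence "\<bar>pc (1/q) (q^2) (Suc m)\<bar> * \<bar>1 - 1/q * (q^2)^Suc m\<bar> \<le> \<bar>pc (1/q) (q^2) (Suc m)\<bar>"
      by (simp add: mult_left_le)
    then show ?case using Suc by (simp add: pc_Suc[of _ _ "Suc m"] abs_mult del: power_Suc)
  qed
  note h = this
  show ?thesis
  proof (cases m)
    case 0 thus ?thesis by simp
  next
    case (Suc n)
    have "\<bar>pc (1/q) (q^2) (Suc n)\<bar> \<le> \<bar>1 - 1/q\<bar>" by (rule h)
    thus ?thesis using Suc by simp
  qed
qed

lemma alg:
  fixes A Bp Bc Bc' P c q X :: real
  assumes "q \<noteq> 0" "Bp \<noteq> 0" "Bc \<noteq> 0" "1 - c \<noteq> 0" "1 - c*P \<noteq> 0" "1 - q^2*P \<noteq> 0"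
    and "Bc' = Bc * (1 - c*P) / (1 - c)"
  shows "(1-c)*(1-c*q^2)*(A^2/(Bp*Bc)*X) - (1-c*q)^2*(A^2/(Bp*Bc')*(X*P))
    = -(1-c)*((A*(1 - 1/q*P))^2/(Bp*(1-q^2*P)*(Bc*(1-c*P)))*(X*(c*q^2))*(1 - q^2*P) - A^2/(Bp*Bc)*X*(1-P))"
proof -
  let ?Z = "A^2*X/(Bp*Bc)"
  have core: "(1-c*q^2)*(1-c*P) - (1-c*q)^2*P = -((q-P)^2*c - (1-P)*(1-c*P))"
    by algebra
  have e1: "(1-c)*(1-c*q^2)*(A^2/(Bp*Bc)*X) - (1-c*q)^2*(A^2/(Bp*Bc')*(X*P))
      = (1-c)*?Z*(((1-c*q^2)*(1-c*P) - (1-c*q)^2*P)/(1-c*P))"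
    unfolding assms(7) using assms(1-6) by (simp add: field_simps)
  have e2: "(A*(1 - 1/q*P))^2/(Bp*(1-q^2*P)*(Bc*(1-c*P)))*(X*(c*q^2))*(1 - q^2*P) - A^2/(Bp*Bc)*X*(1-P)
      = ?Z*(((q-P)^2*c - (1-P)*(1-c*P))/(1-c*P))"
  proof -
    have cancel: "\<And>K B D E Y::real. D \<noteq> 0 \<Longrightarrow> K/(B*D*E)*Y*D = K*Y/(B*E)"
      by simp
    have f: "(A*(1 - 1/q*P))^2*(X*(c*q^2)) = A^2*((q-P)^2*c)*X"
      using assms(1) by (simp add: field_simps power2_eq_square)
    have g: "(A*(1 - 1/q*P))^2/(Bp*(1-q^2*P)*(Bc*(1-c*P)))*(X*(c*q^2))*(1 - q^2*P)
        = A^2*((q-P)^2*c)*X/(Bp*(Bc*(1-c*P)))"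
      unfolding cancel[OF assms(6)] f ..
    show ?thesis unfolding g using assms(1-6) by (simp add: field_simps)
  qed
  show ?thesis unfolding e1 e2 core by (simp add: field_simps)
qed


definition uu :: "real \<Rightarrow> real \<Rightarrow> nat \<Rightarrow> real" where
  "uu q c m = (pc (1/q) (q^2) m)^2 / (pc (q^2) (q^2) m * pc c (q^2) m) * (c*q^2)^m"

definition SS :: "real \<Rightarrow> real \<Rightarrow> real" where
  "SS q c = suminf (uu q c)"

definition Bd :: "real \<Rightarrow> real" where
  "Bd q = (1 + \<bar>1 - 1/q\<bar>)^2 / (\<Prod>k. 1 - q^2 * (q^2) ^ k)^2"

lemma uu_0[simp]: "uu q c 0 = 1" by (simp add: uu_def)

lemma uu_bound:
  assumes q: "0 < q" "q < 1" and c: "0 \<le> c" "c \<le> q^2"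
  shows "\<bar>uu q c m\<bar> \<le> Bd q * (c*q^2)^m"
proof -
  have p: "0 \<le> q^2" "q^2 < 1" using q by (auto simp: power_less_one_iff)
  let ?Pp = "(\<Prod>k. 1 - q^2 * (q^2) ^ k)"
  have Pp: "0 < ?Pp" by (rule pc_inf_pos) (use p in auto)
  have Bp: "?Pp \<le> pc (q^2) (q^2) m" by (rule pc_ge_inf) (use p in auto)
  have Bc: "pc (q^2) (q^2) m \<le> pc c (q^2) m" by (rule pc_mono) (use p c in auto)
  have A: "(pc (1/q) (q^2) m)^2 \<le> (1 + \<bar>1 - 1/q\<bar>)^2"
  proof -
    have "\<bar>pc (1/q) (q^2) m\<bar>^2 \<le> (1 + \<bar>1 - 1/q\<bar>)^2"
      by (rule power_mono[OF pc_inv_bound[OF q] abs_ge_zero])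
    thus ?thesis by simp
  qed
  have den: "?Pp^2 \<le> pc (q^2) (q^2) m * pc c (q^2) m"
  proof -
    have "?Pp * ?Pp \<le> pc (q^2) (q^2) m * pc c (q^2) m"
      by (rule mult_mono) (use Bp Bc Pp in auto)
    thus ?thesis by (simp add: power2_eq_square)
  qed
  define R where "R = (pc (1/q) (q^2) m)^2 / (pc (q^2) (q^2) m * pc c (q^2) m)"
  have R1: "R \<le> (1 + \<bar>1 - 1/q\<bar>)^2 / ?Pp^2"
    unfolding R_def by (rule frac_le) (use A den Pp in auto)
  have R0: "0 \<le> R" unfolding R_def using Bp Bc Pp by simp
  have X0: "0 \<le> (c*q^2)^m" using c by simp
  have "uu q c m = R * (c*q^2)^m" unfolding uu_def R_def ..
  hence "\<bar>uu q c m\<bar> = R * (c*q^2)^m" using R0 X0 by simp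
  also have "\<dots> \<le> Bd q * (c*q^2)^m" unfolding Bd_def by (rule mult_right_mono[OF R1 X0])
  finally show ?thesis .
qed

lemma uu_summable:
  assumes q: "0 < q" "q < 1" and c: "0 \<le> c" "c \<le> q^2"
  shows "summable (uu q c)"
proof (rule summable_comparison_test')
  have p: "0 \<le> q^2" "q^2 < 1" using q by (auto simp: power_less_one_iff)
  have "c*q^2 < 1"
    using c p mult_left_le_one_le[of "q^2" c] by auto
  hence "summable (\<lambda>m. (c*q^2)^m)" using c by (intro summable_geometric) simp
  thus "summable (\<lambda>m. Bd q * (c*q^2)^m)" by (rule summable_mult)
  show "norm (uu q c m) \<le> Bd q * (c*q^2)^m" for m using uu_bound[OF q c] by simp
qed

lemma uu_term:
  assumes q: "0 < q" "q < 1" and c: "0 \<le> c" "c \<le> q^2"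
  shows "(1-c)*(1-c*q^2)*uu q c m - (1-c*q)^2*uu q (c*q^2) m
    = -(1-c)*(uu q c (Suc m) * (1 - (q^2)^Suc m) - uu q c m * (1 - (q^2)^m))"
proof -
  have p: "0 \<le> q^2" "q^2 < 1" using q by (auto simp: power_less_one_iff)
  define A where "A = pc (1/q) (q^2) m"
  define Bp where "Bp = pc (q^2) (q^2) m"
  define Bc where "Bc = pc c (q^2) m"
  define Bc' where "Bc' = pc (c*q^2) (q^2) m"
  define P where "P = (q^2)^m"
  define X where "X = (c*q^2)^m"
  have c1: "c < 1" using c p by simp
  have P1: "P \<le> 1" "0 \<le> P" unfolding P_def using p by (auto simp: power_le_one)
  have Bp0: "Bp > 0" unfolding Bp_def by (rule pc_pos) (use p in auto)
  have Bc0: "Bc > 0" unfolding Bc_def by (rule pc_pos) (use p c c1 in auto)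
  have "c*P \<le> c" using mult_left_le[of P c] P1 c by simp
  hence cP: "c*P < 1" using c1 by simp
  have "q^2*P \<le> q^2" using mult_left_le[of P "q^2"] P1 p by simp
  hence qP: "q^2*P < 1" using p by simp
  have "Bc * (1 - c*P) = (1-c) * Bc'"
    unfolding Bc_def Bc'_def P_def using pc_Suc[of c "q^2" m] pc_Suc_shift[of c "q^2" m] by simp
  hence Bc': "Bc' = Bc * (1 - c*P) / (1 - c)" using c1 by (simp add: field_simps)
  have u0: "uu q c m = A^2/(Bp*Bc)*X" unfolding uu_def A_def Bp_def Bc_def X_def ..
  have u1: "uu q (c*q^2) m = A^2/(Bp*Bc')*(X*P)"
    unfolding uu_def A_def Bp_def Bc'_def X_def P_def power_mult_distrib[of "c*q^2" "q^2" m] ..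
  have u2: "uu q c (Suc m) = (A*(1 - 1/q*P))^2/(Bp*(1-q^2*P)*(Bc*(1-c*P)))*(X*(c*q^2))"
  proof -
    have xs: "(c*q^2)^Suc m = X*(c*q^2)" unfolding X_def by (simp only: power_Suc2)
    show ?thesis unfolding uu_def pc_Suc xs A_def[symmetric] Bp_def[symmetric] Bc_def[symmetric]
      P_def[symmetric] ..
  qed
  have u3: "(q^2)^Suc m = q^2 * P" unfolding P_def by simp
  have n1: "q \<noteq> 0" "Bp \<noteq> 0" "Bc \<noteq> 0" "1 - c \<noteq> 0" "1 - c*P \<noteq> 0" "1 - q^2*P \<noteq> 0"
    using q Bp0 Bc0 c1 cP qP by auto
  have "(1-c)*(1-c*q^2)*uu q c m - (1-c*q)^2*uu q (c*q^2) m
    = -(1-c)*(uu q c (Suc m) * (1 - q^2*P) - uu q c m * (1 - P))"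
    unfolding u0 u1 u2 by (rule alg[OF n1 Bc'])
  thus ?thesis unfolding u3 P_def .
qed

lemma SS_contig:
  assumes q: "0 < q" "q < 1" and c: "0 \<le> c" "c \<le> q^2"
  shows "(1-c)*(1-c*q^2)*SS q c = (1-c*q)^2 * SS q (c*q^2)"
proof -
  have p: "0 \<le> q^2" "q^2 < 1" using q by (auto simp: power_less_one_iff)
  have c2: "0 \<le> c*q^2" "c*q^2 \<le> q^2" using c p mult_left_le_one_le[of "q^2" c] by auto
  have s1: "summable (uu q c)" by (rule uu_summable[OF q c])
  have s2: "summable (uu q (c*q^2))" by (rule uu_summable[OF q c2])
  have "(\<lambda>m. (1-c)*(1-c*q^2)*uu q c m - (1-c*q)^2*uu q (c*q^2) m) sums
        ((1-c)*(1-c*q^2)*SS q c - (1-c*q)^2 * SS q (c*q^2))"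
    unfolding SS_def by (intro sums_diff sums_mult summable_sums s1 s2)
  moreover
  let ?W = "\<lambda>m. uu q c m * (1 - (q^2)^m)"
  have W0: "?W \<longlonglongrightarrow> 0 * (1 - 0)"
    by (intro tendsto_mult tendsto_diff summable_LIMSEQ_zero s1 tendsto_const LIMSEQ_power_zero)
      (use p in auto)
  have "(\<lambda>m. ?W (Suc m) - ?W m) sums (0 - ?W 0)" using telescope_sums[OF W0] by simp
  hence "(\<lambda>m. -(1-c)*(?W (Suc m) - ?W m)) sums (-(1-c)*(0 - ?W 0))" by (rule sums_mult)
  hence "(\<lambda>m. (1-c)*(1-c*q^2)*uu q c m - (1-c*q)^2*uu q (c*q^2) m) sums 0"
    by (simp add: uu_term[OF q c])
  ultimately show ?thesis using sums_unique2 by fastforce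
qed




lemma SS_tail_bound:
  assumes q: "0 < q" "q < 1" and c: "0 \<le> c" "c \<le> q^2"
  shows "\<bar>SS q c - 1\<bar> \<le> Bd q * (c*q^2 * (1 / (1 - c*q^2)))"
proof -
  have p: "0 \<le> q^2" "q^2 < 1" using q by (auto simp: power_less_one_iff)
  define x where "x = c*q^2"
  have x: "0 \<le> x" "x < 1" unfolding x_def using c p mult_left_le_one_le[of "q^2" c] by auto
  have "(\<lambda>m. x^m) sums (1/(1-x))" using x by (intro geometric_sums) simp
  hence "(\<lambda>m. x * x^m) sums (x * (1/(1-x)))" by (rule sums_mult)
  hence "(\<lambda>m. Bd q * (x * x^m)) sums (Bd q * (x * (1/(1-x))))" by (rule sums_mult)
  hence g: "(\<lambda>m. Bd q * x^Suc m) sums (Bd q * (x * (1/(1-x))))" by simp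
  have s: "summable (uu q c)" by (rule uu_summable[OF q c])
  have "SS q c - 1 = (\<Sum>m. uu q c (Suc m))" unfolding SS_def using suminf_split_head[OF s] by simp
  also have "norm \<dots> \<le> (\<Sum>m. Bd q * x^Suc m)"
  proof (rule norm_suminf_le)
    show "norm (uu q c (Suc m)) \<le> Bd q * x^Suc m" for m
      using uu_bound[OF q c, of "Suc m"] unfolding x_def by simp
    show "summable (\<lambda>m. Bd q * x^Suc m)" using sums_summable[OF g] .
  qed
  also have "\<dots> = Bd q * (x * (1/(1-x)))" using g sums_unique by metis
  finally show ?thesis unfolding x_def by simp
qed

lemma SS_lim:
  assumes q: "0 < q" "q < 1"
  shows "(\<lambda>l. SS q ((q^2)^Suc l)) \<longlonglongrightarrow> 1"
proof -
  have p: "0 \<le> q^2" "q^2 < 1" using q by (auto simp: power_less_one_iff)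
  have c0: "(\<lambda>l. (q^2)^Suc l) \<longlonglongrightarrow> 0"
    by (rule LIMSEQ_Suc[OF LIMSEQ_power_zero]) (use p in auto)
  have cb: "0 \<le> (q^2)^Suc l" "(q^2)^Suc l \<le> q^2" for l
    using p mult_left_le[of "(q^2)^l" "q^2"] by (auto simp: power_le_one)
  have g: "(\<lambda>l. Bd q * ((q^2)^Suc l*q^2 * (1 / (1 - (q^2)^Suc l*q^2))))
      \<longlonglongrightarrow> Bd q * (0*q^2 * (1 / (1 - 0*q^2)))"
    by (intro tendsto_intros c0) auto
  have "(\<lambda>l. SS q ((q^2)^Suc l) - 1) \<longlonglongrightarrow> 0"
    by (rule Lim_null_comparison[OF _ g[simplified]])
      (use SS_tail_bound[OF q cb] in auto)
  hence "(\<lambda>l. (SS q ((q^2)^Suc l) - 1) + 1) \<longlonglongrightarrow> 0 + 1" by (intro tendsto_add) auto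
  thus ?thesis by simp
qed

definition VV :: "real \<Rightarrow> nat \<Rightarrow> real" where
  "VV q l = (1 - (q^2)^Suc l) * SS q ((q^2)^Suc l)"

definition RR :: "real \<Rightarrow> nat \<Rightarrow> real" where
  "RR q l = VV q l * (pc q (q^2) (Suc l) / pc (q^2) (q^2) (Suc l))^2"

lemma alg3:
  fixes d S A B e :: real
  assumes "d \<noteq> 0" "B \<noteq> 0"
  shows "d*S*(A*e)^2/(B*d)^2 = (e^2*S)*A^2/(B^2*d)"
  using assms by (simp add: power2_eq_square field_simps)

lemma RR_step:
  assumes q: "0 < q" "q < 1"
  shows "RR q (Suc l) = RR q l"
proof -
  have p: "0 \<le> q^2" "q^2 < 1" using q by (auto simp: power_less_one_iff)
  define c where "c = (q^2)^Suc l"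
  have cb: "0 \<le> c" "c \<le> q^2" unfolding c_def
    using p mult_left_le[of "(q^2)^l" "q^2"] by (auto simp: power_le_one)
  have cp1: "c*q^2 < 1" using cb p mult_left_le_one_le[of "q^2" c] by auto
  have ct: "(q^2)^Suc (Suc l) = c*q^2" unfolding c_def by simp
  have contig: "(1-c)*(1-c*q^2)*SS q c = (1-c*q)^2 * SS q (c*q^2)" by (rule SS_contig[OF q cb])
  have V0: "VV q l = (1-c)*SS q c" unfolding VV_def c_def ..
  have V1: "VV q (Suc l) = (1-c*q^2)*SS q (c*q^2)" unfolding VV_def ct ..
  have A1: "pc q (q^2) (Suc (Suc l)) = pc q (q^2) (Suc l) * (1 - c*q)"
    unfolding pc_Suc[of q "q^2" "Suc l"] c_def by (simp add: mult.commute)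
  have B1: "pc (q^2) (q^2) (Suc (Suc l)) = pc (q^2) (q^2) (Suc l) * (1 - c*q^2)"
    unfolding pc_Suc[of "q^2" "q^2" "Suc l"] c_def by (simp add: mult.commute)
  have Bpos: "pc (q^2) (q^2) (Suc l) > 0" by (rule pc_pos) (use p in auto)
  have "RR q (Suc l) = (1-c*q^2)*SS q (c*q^2) * (pc q (q^2) (Suc l) * (1 - c*q))^2
      / (pc (q^2) (q^2) (Suc l) * (1 - c*q^2))^2"
    unfolding RR_def V1 A1 B1 by (simp add: power_divide)
  also have "\<dots> = ((1-c*q)^2 * SS q (c*q^2)) * pc q (q^2) (Suc l)^2
      / (pc (q^2) (q^2) (Suc l)^2 * (1 - c*q^2))"
    by (rule alg3) (use cp1 Bpos in auto)
  also have "\<dots> = ((1-c)*(1-c*q^2)*SS q c) * pc q (q^2) (Suc l)^2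
      / (pc (q^2) (q^2) (Suc l)^2 * (1 - c*q^2))" unfolding contig ..
  also have "\<dots> = RR q l"
    unfolding RR_def V0 using cp1 Bpos by (simp add: power_divide field_simps)
  finally show ?thesis .
qed

lemma VV_formula:
  assumes q: "0 < q" "q < 1"
  shows "VV q l = ((\<Prod>k. 1 - q*(q^2)^k) / (\<Prod>k. 1 - q^2*(q^2)^k))^2
    * (pc (q^2) (q^2) (Suc l) / pc q (q^2) (Suc l))^2"
proof -
  have p: "0 \<le> q^2" "q^2 < 1" using q by (auto simp: power_less_one_iff)
  let ?Pq = "\<Prod>k. 1 - q*(q^2)^k" and ?Pp = "\<Prod>k. 1 - q^2*(q^2)^k"
  have Pp0: "?Pp > 0" by (rule pc_inf_pos) (use p in auto)
  have const: "RR q n = RR q 0" for n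
    by (induction n) (simp_all add: RR_step[OF q])
  have c0: "(\<lambda>l. (q^2)^Suc l) \<longlonglongrightarrow> 0"
    by (rule LIMSEQ_Suc[OF LIMSEQ_power_zero]) (use p in auto)
  have V: "(\<lambda>l. VV q l) \<longlonglongrightarrow> (1 - 0) * 1"
    unfolding VV_def by (rule tendsto_mult[OF tendsto_diff[OF tendsto_const c0] SS_lim[OF q]])
  have A: "(\<lambda>l. pc q (q^2) (Suc l)) \<longlonglongrightarrow> ?Pq"
    by (rule LIMSEQ_Suc[OF pc_lim]) (use q p in auto)
  have B: "(\<lambda>l. pc (q^2) (q^2) (Suc l)) \<longlonglongrightarrow> ?Pp"
    by (rule LIMSEQ_Suc[OF pc_lim]) (use p in auto)
  have "(\<lambda>l. RR q l) \<longlonglongrightarrow> (1 - 0) * 1 * (?Pq / ?Pp)^2"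
    unfolding RR_def
    by (rule tendsto_mult[OF V tendsto_power[OF tendsto_divide[OF A B]]]) (use Pp0 in auto)
  moreover have "(\<lambda>l. RR q l) \<longlonglongrightarrow> RR q 0" by (subst const) (rule tendsto_const)
  ultimately have R0: "RR q 0 = (?Pq / ?Pp)^2" using LIMSEQ_unique by fastforce
  have Apos: "pc q (q^2) (Suc l) > 0" by (rule pc_pos) (use q p in auto)
  have Bpos: "pc (q^2) (q^2) (Suc l) > 0" by (rule pc_pos) (use p in auto)
  have h: "VV q l * (pc q (q^2) (Suc l) / pc (q^2) (q^2) (Suc l))^2 = (?Pq / ?Pp)^2"
    using const[of l] R0 unfolding RR_def by simp
  have gen: "x = (x * (a/b)^2) * (b/a)^2" if "a \<noteq> 0" "b \<noteq> 0" for x a b :: real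
    using that by (simp add: power_divide field_simps)
  show ?thesis
    by (subst gen[of "pc q (q^2) (Suc l)" "pc (q^2) (q^2) (Suc l)"]) (use Apos Bpos h in auto)
qed




lemma qnum_nat:
  assumes "0 < q" shows "qnum q (real k) = (1 - (q^2)^k)/(1-q^2)"
proof -
  have "q powr (2 * real k) = q powr real (2*k)" by simp
  also have "\<dots> = (q^2)^k" by (simp only: powr_realpow[OF assms] power_mult)
  finally show ?thesis unfolding qnum_def by simp
qed

lemma qnum_half:
  assumes "0 < q" shows "qnum q (1/2 + real k) = (1 - q*(q^2)^k)/(1-q^2)"
proof -
  have "q powr (2 * (1/2 + real k)) = q powr real (Suc (2*k))" by simp
  also have "\<dots> = q*(q^2)^k" by (simp only: powr_realpow[OF assms] power_Suc power_mult)
  finally show ?thesis unfolding qnum_def by simp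
qed

lemma qfact_pc:
  assumes "0 < q" shows "qfact q n = pc (q^2) (q^2) n / (1-q^2)^n"
proof (induction n)
  case 0 then show ?case by (simp add: qfact_def)
next
  case (Suc n)
  have "qfact q (Suc n) = qnum q (real (Suc n)) * qfact q n"
    unfolding qfact_def by (simp add: prod.nat_ivl_Suc')
  also have "\<dots> = (1 - (q^2)^Suc n)/(1-q^2) * (pc (q^2) (q^2) n / (1-q^2)^n)"
    using Suc qnum_nat[OF assms, of "Suc n"] by simp
  also have "\<dots> = pc (q^2) (q^2) (Suc n) / (1-q^2)^Suc n"
    unfolding pc_Suc by (simp add: field_simps)
  finally show ?case .
qed

lemma qhalf_pc:
  assumes "0 < q" shows "qhalf_poch q n = pc q (q^2) n / (1-q^2)^n"
proof (induction n)
  case 0 then show ?case by (simp add: qhalf_poch_def)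
next
  case (Suc n)
  have "qhalf_poch q (Suc n) = qhalf_poch q n * qnum q (1/2 + real n)"
    unfolding qhalf_poch_def by simp
  also have "\<dots> = (pc q (q^2) n / (1-q^2)^n) * ((1 - q*(q^2)^n)/(1-q^2))"
    using Suc qnum_half[OF assms, of n] by simp
  also have "\<dots> = pc q (q^2) (Suc n) / (1-q^2)^Suc n"
    unfolding pc_Suc by (simp add: field_simps)
  finally show ?case .
qed




lemma alg2:
  fixes E a b Bl Bn Cn Aq Y q c :: real
  assumes "0 < q" "1 - q \<noteq> 0" "E = 1 - q^2" "a \<noteq> 0" "b \<noteq> 0" "Bl \<noteq> 0" "Bn \<noteq> 0" "Cn \<noteq> 0"
  shows "Bl*(1-c)/(b*E) * ((Aq/a)^2/(Bn/(E*a) * (Bl*Cn/(b*a*E))) * Y)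
     = q^2*(1+q)/(1-q)*(1-c)*(((1-1/q)*Aq)^2/(Bn*Cn)*Y)"
proof -
  have E: "E = (1-q)*(1+q)" using assms(3) by (simp add: power2_eq_square algebra_simps)
  have E0: "E \<noteq> 0" unfolding E using assms by simp
  have "Bl*(1-c)/(b*E) * ((Aq/a)^2/(Bn/(E*a) * (Bl*Cn/(b*a*E))) * Y) = (1-c)*Aq^2*Y*E/(Bn*Cn)"
    using assms E0 by (simp add: power_divide field_simps power2_eq_square)
  also have "\<dots> = q^2*(1+q)/(1-q)*(1-c)*(((1-1/q)*Aq)^2/(Bn*Cn)*Y)"
  proof -
    have "q^2*(1+q)/(1-q)*(1-1/q)^2 = E" unfolding E using assms(1,2)
      by (simp add: power2_eq_square field_simps)
    moreover have gen: "K*(1-c)*((z*Aq)^2/D*Y) = (K*z^2)*((1-c)*Aq^2*Y/D)" for K z D :: real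
      by (simp add: power_mult_distrib)
    ultimately show ?thesis using gen[of "q^2*(1+q)/(1-q)" "1-1/q" "Bn*Cn"] by simp
  qed
  finally show ?thesis .
qed

lemma term_eq:
  assumes q: "0 < q" "q < 1"
  shows "qfact q (l+1) * ((qhalf_poch q n)^2 / (qfact q (n+1) * qfact q (l+n+1)) * q^(2*(l+2)*(n+1)))
    = q^2*(1+q)/(1-q)*(1-(q^2)^Suc l)*uu q ((q^2)^Suc l) (Suc n)"
proof -
  have p: "0 \<le> q^2" "q^2 < 1" using q by (auto simp: power_less_one_iff)
  define c where "c = (q^2)^Suc l"
  define E where "E = 1 - q^2"
  have "(q^2)^Suc l \<le> q^2" using p mult_left_le[of "(q^2)^l" "q^2"] by (simp add: power_le_one)
  hence c1: "0 \<le> c" "c < 1" unfolding c_def using p by auto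
  have E0: "E \<noteq> 0" unfolding E_def using p by simp
  have i1: "qfact q (l+1) = pc (q^2) (q^2) l * (1-c) / (E^l*E)"
    unfolding qfact_pc[OF q(1)] E_def c_def by (simp add: pc_Suc mult.commute)
  have i2: "qhalf_poch q n = pc q (q^2) n / E^n" unfolding qhalf_pc[OF q(1)] E_def ..
  have i3: "qfact q (n+1) = pc (q^2) (q^2) (Suc n) / (E*E^n)" unfolding qfact_pc[OF q(1)] E_def by simp
  have i4: "qfact q (l+n+1) = pc (q^2) (q^2) l * pc c (q^2) (Suc n) / (E^l*E^n*E)"
  proof -
    have "pc (q^2) (q^2) (l + Suc n) = pc (q^2) (q^2) l * pc c (q^2) (Suc n)"
      unfolding pc_add c_def by simp
    moreover have "(1-q^2)^(l + Suc n) = E^l*E^n*E" unfolding E_def by (simp add: power_add mult_ac)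
    ultimately show ?thesis unfolding qfact_pc[OF q(1)] by simp
  qed
  have i5: "q^(2*(l+2)*(n+1)) = (c*q^2)^Suc n"
  proof -
    have e: "c*q^2 = q^(2*(l+2))" unfolding c_def by (simp add: power_mult[symmetric] power_add[symmetric])
    have "q^(2*(l+2)*(n+1)) = (q^(2*(l+2)))^(n+1)" by (rule power_mult)
    thus ?thesis unfolding e[symmetric] by simp
  qed
  have i6: "pc (1/q) (q^2) (Suc n) = (1 - 1/q) * pc q (q^2) n"
    unfolding pc_Suc_shift using q by (simp add: power2_eq_square)
  have u: "uu q c (Suc n) = ((1-1/q) * pc q (q^2) n)^2 / (pc (q^2) (q^2) (Suc n) * pc c (q^2) (Suc n)) * (c*q^2)^Suc n"
    unfolding uu_def i6 ..
  have pos: "pc (q^2) (q^2) l > 0" "pc (q^2) (q^2) (Suc n) > 0" "pc c (q^2) (Suc n) > 0"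
    by (rule pc_pos; use p c1 in auto)+
  show ?thesis unfolding c_def[symmetric] i1 i2 i3 i4 i5 u
    by (rule alg2) (use q pos E_def E0 in auto)
qed




lemma fin1:
  fixes q c S F k :: real
  assumes "0 < q" "q < 1" "c < 1" "F \<noteq> 0" "k = q^2*(1+q)/(1-q)*(1-c)/F"
  shows "q^2*(1+q)^2*((1-c)/(1-q^2)) + c*q^2 + F*(k*(S - (1 + (1-1/q)^2/((1-q^2)*(1-c))*(c*q^2))))
    = q^2*(1+q)/(1-q)*((1-c)*S)"
proof -
  have E: "1 - q^2 = (1-q)*(1+q)" by (simp add: power2_eq_square algebra_simps)
  have n: "1 - q \<noteq> 0" "1 + q \<noteq> 0" "1 - c \<noteq> 0" "q \<noteq> 0" using assms by auto
  have "q*q < 1*1" by (rule mult_strict_mono) (use assms in auto)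
  hence qq: "q*q \<noteq> 1" "1 - q*q \<noteq> 0" "1 - q^2 \<noteq> 0" by (auto simp: power2_eq_square)
  define K where "K = q^2*(1+q)/(1-q)"
  define U where "U = (1-1/q)^2/((1-q^2)*(1-c))*(c*q^2)"
  have h1: "q^2*(1+q)^2*((1-c)/(1-q^2)) = K*(1-c)"
    unfolding K_def using n qq by (simp add: power2_eq_square field_simps)
  have b: "K*(1-1/q)^2 = 1 - q^2"
    unfolding K_def using n qq by (simp add: power2_eq_square field_simps)
  have "K*(1-c)*U = (K*(1-1/q)^2) * ((1-c) * (c*q^2)) / ((1-q^2)*(1-c))"
    unfolding U_def by (simp add: mult_ac)
  also have "\<dots> = c*q^2" unfolding b using n qq by simp
  finally have h3: "K*(1-c)*U = c*q^2" .
  have h2: "F*(k*X) = K*(1-c)*X" for X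
    unfolding assms(5) K_def using assms(4) by simp
  show ?thesis unfolding h1 h2 U_def[symmetric] K_def[symmetric] using h3 by algebra
qed

lemma fin2:
  fixes q r G Pp Pq A B :: real
  assumes "0 < q" "q < 1" "r \<noteq> 0" "G \<noteq> 0" "Pp \<noteq> 0" "Pq \<noteq> 0" "A \<noteq> 0"
  shows "(1+q)^2*(B/G)^2/(((1-q^2)*r*Pp^2/Pq^2)*(A/G)^2)*(r*q^2)
    = q^2*(1+q)/(1-q)*((Pq/Pp)^2*(B/A)^2)"
proof -
  have E: "1 - q^2 = (1-q)*(1+q)" by (simp add: power2_eq_square algebra_simps)
  have n: "1 - q \<noteq> 0" "1 + q \<noteq> 0" using assms by auto
  have r1: "(1+q)^2*(B/G)^2/((E*r*Pp^2/Pq^2)*(A/G)^2)*(r*q^2) = ((1+q)^2/E)*(q^2*((Pq/Pp)^2*(B/A)^2))"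
    if "E \<noteq> 0" for E using that assms by (simp add: power2_eq_square field_simps)
  have r2: "(1+q)^2/(1-q^2) = (1+q)/(1-q)" unfolding E using n by (simp add: power2_eq_square)
  have "1 - q^2 \<noteq> 0" unfolding E using n by simp
  thus ?thesis unfolding r1[OF \<open>1 - q^2 \<noteq> 0\<close>] r2 by simp
qed

lemma solveF: "(F::real) \<noteq> 0 \<Longrightarrow> F * T = Z * u \<Longrightarrow> T = Z / F * u"
  by (auto simp: field_simps)

theorem mainTheorem7:
  fixes q :: real and l :: nat
  assumes "0 < q" and "q < 1"
  shows "q\<^sup>2 * (1 + q)\<^sup>2 * qnum q (real (l + 1)) + q ^ (2 * l + 4)
      + qfact q (l + 1) *
        (\<Sum>m. (let n = Suc m in
           (qhalf_poch q n)\<^sup>2 / (qfact q (n + 1) * qfact q (l + n + 1))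
             * q ^ (2 * (l + 2) * (n + 1))))
    = (1 + q)\<^sup>2 * (qfact q (l + 1))\<^sup>2 / (qpi q * (qhalf_poch q (l + 1))\<^sup>2) * q powr (9/4)"
proof -
  note q = assms
  have p: "0 \<le> q^2" "q^2 < 1" using q by (auto simp: power_less_one_iff)
  define c where "c = (q^2)^Suc l"
  have "(q^2)^Suc l \<le> q^2" using p mult_left_le[of "(q^2)^l" "q^2"] by (simp add: power_le_one)
  hence cb: "0 \<le> c" "c \<le> q^2" "c < 1" unfolding c_def using p by auto
  define F where "F = qfact q (l+1)"
  have Bl1: "pc (q^2) (q^2) (Suc l) > 0" by (rule pc_pos) (use p in auto)
  have Aq1: "pc q (q^2) (Suc l) > 0" by (rule pc_pos) (use q p in auto)
  have F0: "F > 0" unfolding F_def qfact_pc[OF q(1)] using Bl1 p by simp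
  define k where "k = q^2*(1+q)/(1-q)*(1-c)/F"
  have tm: "(let n = Suc m in
           (qhalf_poch q n)\<^sup>2 / (qfact q (n + 1) * qfact q (l + n + 1))
             * q ^ (2 * (l + 2) * (n + 1))) = k * uu q c (m+2)" for m
  proof -
    have "F * ((qhalf_poch q (Suc m))\<^sup>2 / (qfact q (Suc m + 1) * qfact q (l + Suc m + 1))
             * q ^ (2 * (l + 2) * (Suc m + 1))) = q^2*(1+q)/(1-q)*(1-c)*uu q c (Suc (Suc m))"
      unfolding F_def c_def by (rule term_eq[OF q])
    moreover have "uu q c (m+2) = uu q c (Suc (Suc m))" by simp
    ultimately show ?thesis unfolding Let_def k_def using F0 by (intro solveF) auto
  qed
  have s: "summable (uu q c)" by (rule uu_summable[OF q cb(1,2)])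
  have s2: "summable (\<lambda>m. uu q c (m+2))" using s by (subst summable_iff_shift)
  have u1: "uu q c 1 = (1-1/q)^2/((1-q^2)*(1-c))*(c*q^2)"
    unfolding uu_def by (simp add: pc_Suc)
  have sum2: "(\<Sum>m. uu q c (m+2)) = SS q c - (1 + (1-1/q)^2/((1-q^2)*(1-c))*(c*q^2))"
    using suminf_split_initial_segment[OF s, of 2] unfolding SS_def
    by (simp add: numeral_2_eq_2 u1[simplified])
  have L: "(\<Sum>m. (let n = Suc m in
           (qhalf_poch q n)\<^sup>2 / (qfact q (n + 1) * qfact q (l + n + 1))
             * q ^ (2 * (l + 2) * (n + 1)))) = k * (SS q c - (1 + (1-1/q)^2/((1-q^2)*(1-c))*(c*q^2)))"
    unfolding tm suminf_mult[OF s2] sum2 ..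
  have qn: "qnum q (real (l + 1)) = (1-c)/(1-q^2)" unfolding c_def qnum_nat[OF q(1)] by simp
  have qp: "q ^ (2 * l + 4) = c*q^2"
  proof -
    have e: "2 * l + 4 = 2*(Suc l + 1)" by simp
    have "q ^ (2 * l + 4) = q^(2*(Suc l + 1))" unfolding e ..
    also have "\<dots> = (q^2)^(Suc l + 1)" by (rule power_mult)
    finally show ?thesis unfolding c_def by simp
  qed
  have LHS: "q\<^sup>2 * (1 + q)\<^sup>2 * qnum q (real (l + 1)) + q ^ (2 * l + 4)
      + qfact q (l + 1) *
        (\<Sum>m. (let n = Suc m in
           (qhalf_poch q n)\<^sup>2 / (qfact q (n + 1) * qfact q (l + n + 1))
             * q ^ (2 * (l + 2) * (n + 1)))) = q^2*(1+q)/(1-q)*((1-c)*SS q c)"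
    unfolding L qn qp F_def[symmetric] by (rule fin1[OF q cb(3)]) (use F0 k_def in auto)
  have VV: "(1-c)*SS q c = ((\<Prod>k. 1 - q*(q^2)^k) / (\<Prod>k. 1 - q^2*(q^2)^k))^2
    * (pc (q^2) (q^2) (Suc l) / pc q (q^2) (Suc l))^2"
    using VV_formula[OF q, of l] unfolding VV_def c_def .
  have pw: "q powr (9/4) = q powr (1/4) * q^2"
  proof -
    have "q powr (9/4) = q powr (1/4 + 2)" by simp
    also have "\<dots> = q powr (1/4) * q^2" unfolding powr_add using q by simp
    finally show ?thesis .
  qed
  have Pp0: "(\<Prod>k. 1 - q^2*(q^2)^k) > 0" by (rule pc_inf_pos) (use p in auto)
  have Pq0: "(\<Prod>k. 1 - q*(q^2)^k) > 0" by (rule pc_inf_pos) (use q p in auto)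
  have RHS: "(1 + q)\<^sup>2 * (qfact q (l + 1))\<^sup>2 / (qpi q * (qhalf_poch q (l + 1))\<^sup>2) * q powr (9/4)
     = q^2*(1+q)/(1-q)*(((\<Prod>k. 1 - q*(q^2)^k) / (\<Prod>k. 1 - q^2*(q^2)^k))^2
    * (pc (q^2) (q^2) (Suc l) / pc q (q^2) (Suc l))^2)"
    unfolding qfact_pc[OF q(1)] qhalf_pc[OF q(1)] qpi_def qpoch_inf_def pw Suc_eq_plus1[symmetric]
    by (rule fin2[OF q]) (use q Pp0 Pq0 Aq1 p in auto)
  show ?thesis unfolding LHS RHS VV ..
qed


end
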